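(* Suppose $\sigma_n\in[0,1]$ satisfies $\sigma_n\sim n^{-a}$ for some $a\in(0,1/2)$. Then almost surely there is a constant $C_\omega$ such that for all $N\ge2$, $$\max_{1\le m\le N}\max_{t\in[0,1]}\Bigl|\sum_{n=1}^{N-m}Y_{n+m}(\omega)\,Y_n(\omega)\,e(nt)\Bigr|\le C_\omega\,N^{1/2-a}\sqrt{\log N}.$$
   Context: Random setup: $(\Omega,\mathcal F,\mathbb P)$ is a probability space and $(X_n)_{n\in\mathbb N}$ are independent random variables with $\mathbb P(X_n=1)=\sigma_n$, $\mathbb P(X_n=0)=1-\sigma_n$; $Y_n=X_n-\sigma_n$. $e(t)=e^{2\pi i t}$. $u_n\sim v_n$ means $u_n/v_n$ converges to a nonzero constant. *)

theory Defs
  imports "HOL-Probability.Probability"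
begin

definition e :: "real \<Rightarrow> complex" where
  "e t = exp (2 * of_real pi * \<i> * of_real t)"

end

theory Submission imports Defs "HOL-Real_Asymp.Real_Asymp" begin

lemma e_cis: "e t = cis (2*pi*t)"
  by (simp add: e_def cis_conv_exp mult_ac)

lemma cos_lip: fixes x y :: real shows "\<bar>cos x - cos y\<bar> \<le> \<bar>x - y\<bar>"
proof -
  have "\<bar>cos x - cos y\<bar> = 2 * \<bar>sin ((x + y) / 2)\<bar> * \<bar>sin ((y - x) / 2)\<bar>"
    by (simp add: cos_diff_cos abs_mult)
  also have "\<dots> \<le> 2 * 1 * \<bar>(y - x) / 2\<bar>"
    by (intro mult_mono abs_sin_x_le_abs_x) auto
  finally show ?thesis by simp
qed

lemma sin_lip: fixes x y :: real shows "\<bar>sin x - sin y\<bar> \<le> \<bar>x - y\<bar>"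
proof -
  have "\<bar>sin x - sin y\<bar> = 2 * \<bar>sin ((x - y) / 2)\<bar> * \<bar>cos ((x + y) / 2)\<bar>"
    by (simp add: sin_diff_sin abs_mult)
  also have "\<dots> \<le> 2 * \<bar>(x - y) / 2\<bar> * 1"
    by (intro mult_mono abs_sin_x_le_abs_x) auto
  finally show ?thesis by simp
qed

lemma e_lip: "norm (e x - e y) \<le> 4*pi*\<bar>x - y\<bar>"
proof -
  have "norm (e x - e y) \<le> \<bar>cos (2*pi*x) - cos (2*pi*y)\<bar> + \<bar>sin (2*pi*x) - sin (2*pi*y)\<bar>"
    using cmod_le[of "e x - e y"] by (simp add: e_cis)
  also have "\<dots> \<le> \<bar>2*pi*x - 2*pi*y\<bar> + \<bar>2*pi*x - 2*pi*y\<bar>"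
    by (intro add_mono cos_lip sin_lip)
  also have "\<dots> = 4*pi*\<bar>x - y\<bar>"
    by (simp add: right_diff_distrib[symmetric] abs_mult)
  finally show ?thesis .
qed

lemma sum_powr_bound:
  fixes b :: real assumes b: "0 \<le> b" "b < 1"
  shows "(\<Sum>n=1..N. real n powr (-b)) \<le> real N powr (1-b) / (1-b)"
proof (induction N)
  case 0 then show ?case by simp
next
  case (Suc N)
  define x where "x = real N"
  define y where "y = x + 1"
  have x0: "0 \<le> x" and y0: "0 < y" by (auto simp: x_def y_def)
  have h1: "x powr (1-b) * y powr b \<le> x + b"
  proof (cases "x = 0")
    case True then show ?thesis using b by simp
  next
    case False
    then have "x powr (1-b) * y powr b \<le> (1-b)*x + b*y"
      using x0 y0 b by (intro Youngs_inequality_0) auto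
    then show ?thesis by (simp add: y_def algebra_simps)
  qed
  have h2: "y powr b * y powr (-b) = 1"
    using y0 by (simp flip: powr_add)
  have h3: "x powr (1-b) \<le> (x + b) * y powr (-b)"
  proof -
    have "x powr (1-b) = x powr (1-b) * y powr b * y powr (-b)" using h2 by (simp add: mult.assoc)
    also have "\<dots> \<le> (x + b) * y powr (-b)" by (intro mult_right_mono h1) auto
    finally show ?thesis .
  qed
  have h4: "y powr (1-b) = y * y powr (-b)"
  proof -
    have "y powr (1-b) = y powr (1 + (-b))" by simp
    also have "\<dots> = y powr 1 * y powr (-b)" by (rule powr_add)
    finally show ?thesis using y0 by simp
  qed
  have "(\<Sum>n=1..Suc N. real n powr (-b)) = (\<Sum>n=1..N. real n powr (-b)) + y powr (-b)"
    by (simp add: x_def y_def add.commute)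
  also have "\<dots> \<le> x powr (1-b) / (1-b) + y powr (-b)"
    using Suc.IH by (simp add: x_def)
  also have "\<dots> \<le> y powr (1-b) / (1-b)"
  proof -
    have "x powr (1-b) + (1-b) * y powr (-b) \<le> y powr (1-b)"
      using h3 h4 by (simp add: y_def algebra_simps)
    then have "(x powr (1-b) + (1-b) * y powr (-b)) / (1-b) \<le> y powr (1-b) / (1-b)"
      by (rule divide_right_mono) (use b in auto)
    moreover have "(x powr (1-b) + (1-b) * y powr (-b)) / (1-b) = x powr (1-b) / (1-b) + y powr (-b)"
      using b by (simp add: add_divide_distrib)
    ultimately show ?thesis by simp
  qed
  finally show ?case by (simp add: y_def x_def add.commute)
qed

lemma lim_aux:
  fixes b :: real assumes "0 < b"
  shows "((\<lambda>N::nat. sqrt (ln (real N)) / real N powr b) \<longlongrightarrow> 0) at_top"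
  using assms by real_asymp



lemma exp_le_quad:
  fixes y :: real assumes "\<bar>y\<bar> \<le> 1" shows "exp y \<le> 1 + y + y^2"
proof (cases "y \<ge> 0")
  case True then show ?thesis using exp_bound[of y] assms by auto
next
  case False
  have "1 - y \<le> exp (-y)" using exp_ge_add_one_self[of "-y"] by simp
  then have "exp y \<le> 1 / (1 - y)" using False
    by (simp add: exp_minus field_simps)
  also have "\<dots> \<le> 1 + y + y^2"
  proof -
    have "1 \<le> (1 - y) * (1 + y + y^2)" using False
      by (simp add: algebra_simps power2_eq_square power3_eq_cube mult_nonneg_nonpos2 mult_nonpos_nonpos)
    then show ?thesis using False by (simp add: field_simps)
  qed
  finally show ?thesis .
qed

lemma (in prob_space) conc:
  fixes Z :: "'i \<Rightarrow> 'a \<Rightarrow> real"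
  assumes fin: "finite I" and ind: "indep_vars (\<lambda>_. borel) Z I"
  and bnd: "\<And>i \<omega>. i\<in>I \<Longrightarrow> \<bar>Z i \<omega>\<bar> \<le> 1"
  and E0: "\<And>i. i\<in>I \<Longrightarrow> expectation (Z i) = 0"
  and E2: "\<And>i. i\<in>I \<Longrightarrow> expectation (\<lambda>\<omega>. (Z i \<omega>)^2) \<le> v i"
  and l: "0 < l" "l \<le> 1" and V: "(\<Sum>i\<in>I. v i) \<le> V"
  shows "prob {\<omega>\<in>space M. (\<Sum>i\<in>I. Z i \<omega>) \<ge> \<epsilon>} \<le> exp (l^2 * V - l*\<epsilon>)"
proof -
  have Zm[measurable]: "i \<in> I \<Longrightarrow> Z i \<in> borel_measurable M" for i
    using ind unfolding indep_vars_def by auto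
  have intZ: "i \<in> I \<Longrightarrow> integrable M (Z i)" for i
    by (rule integrable_const_bound[where B=1]) (auto simp: bnd)
  have intZ2: "i \<in> I \<Longrightarrow> integrable M (\<lambda>\<omega>. (Z i \<omega>)^2)" for i
    by (rule integrable_const_bound[where B=1]) (auto simp: bnd abs_square_le_1)
  have one: "(\<integral>\<^sup>+\<omega>. ennreal (exp (l * Z i \<omega>)) \<partial>M) \<le> ennreal (exp (l^2 * v i))" if i: "i \<in> I" for i
  proof -
    have "(\<integral>\<^sup>+\<omega>. ennreal (exp (l * Z i \<omega>)) \<partial>M) \<le> (\<integral>\<^sup>+\<omega>. ennreal (1 + l * Z i \<omega> + l^2 * (Z i \<omega>)^2) \<partial>M)"
    proof (rule nn_integral_mono)
      fix \<omega>
      have "\<bar>l * Z i \<omega>\<bar> \<le> 1" using bnd[OF i, of \<omega>] l by (simp add: abs_mult mult_le_one)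
      then have "exp (l * Z i \<omega>) \<le> 1 + l * Z i \<omega> + (l * Z i \<omega>)^2" by (rule exp_le_quad)
      then show "ennreal (exp (l * Z i \<omega>)) \<le> ennreal (1 + l * Z i \<omega> + l^2 * (Z i \<omega>)^2)"
        by (simp add: power_mult_distrib ennreal_leI)
    qed
    also have "\<dots> = ennreal (\<integral>\<omega>. (1 + l * Z i \<omega> + l^2 * (Z i \<omega>)^2) \<partial>M)"
    proof (rule nn_integral_eq_integral)
      show "integrable M (\<lambda>\<omega>. 1 + l * Z i \<omega> + l^2 * (Z i \<omega>)^2)"
        using intZ[OF i] intZ2[OF i] by auto
      show "AE \<omega> in M. 0 \<le> 1 + l * Z i \<omega> + l^2 * (Z i \<omega>)^2"
      proof (rule AE_I2)
        fix \<omega> have "0 \<le> (l * Z i \<omega> + 1/2)^2 + 3/4" by simp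
        then show "0 \<le> 1 + l * Z i \<omega> + l^2 * (Z i \<omega>)^2" by (simp add: power2_eq_square algebra_simps)
      qed
    qed
    also have "(\<integral>\<omega>. (1 + l * Z i \<omega> + l^2 * (Z i \<omega>)^2) \<partial>M) = 1 + l * expectation (Z i) + l^2 * expectation (\<lambda>\<omega>. (Z i \<omega>)^2)"
      using intZ[OF i] intZ2[OF i] by (simp add: prob_space)
    also have "\<dots> \<le> 1 + l^2 * v i" using E0[OF i] E2[OF i] by (simp add: mult_left_mono)
    also have "\<dots> \<le> exp (l^2 * v i)" by (rule exp_ge_add_one_self)
    finally show ?thesis by (simp add: ennreal_leI)
  qed
  have "ennreal (prob {\<omega>\<in>space M. (\<Sum>i\<in>I. Z i \<omega>) \<ge> \<epsilon>}) = emeasure M {\<omega>\<in>space M. (\<Sum>i\<in>I. Z i \<omega>) \<ge> \<epsilon>}"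
    by (simp add: emeasure_eq_measure)
  also have "\<dots> \<le> ennreal (exp (-l*\<epsilon>)) * (\<integral>\<^sup>+\<omega>. ennreal (exp (l * (\<Sum>i\<in>I. Z i \<omega>))) * indicator (space M) \<omega> \<partial>M)"
    by (intro Chernoff_ineq_nn_integral_ge l) auto
  also have "(\<integral>\<^sup>+\<omega>. ennreal (exp (l * (\<Sum>i\<in>I. Z i \<omega>))) * indicator (space M) \<omega> \<partial>M) =
             (\<integral>\<^sup>+\<omega>. (\<Prod>i\<in>I. ennreal (exp (l * Z i \<omega>))) \<partial>M)"
    by (intro nn_integral_cong)
       (simp_all add: sum_distrib_left exp_sum fin prod_ennreal)
  also have "\<dots> = (\<Prod>i\<in>I. \<integral>\<^sup>+\<omega>. ennreal (exp (l * Z i \<omega>)) \<partial>M)"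
    by (intro indep_vars_nn_integral fin indep_vars_compose2[OF ind]) auto
  also have "ennreal (exp (-l*\<epsilon>)) * \<dots> \<le> ennreal (exp (-l*\<epsilon>)) * (\<Prod>i\<in>I. ennreal (exp (l^2 * v i)))"
    by (intro mult_left_mono prod_mono_ennreal one) auto
  also have "\<dots> = ennreal (exp (-l*\<epsilon>) * (\<Prod>i\<in>I. exp (l^2 * v i)))"
    by (simp add: prod_ennreal prod_nonneg flip: ennreal_mult)
  also have "exp (-l*\<epsilon>) * (\<Prod>i\<in>I. exp (l^2 * v i)) = exp (l^2 * (\<Sum>i\<in>I. v i) - l*\<epsilon>)"
  proof -
    have "(\<Prod>i\<in>I. exp (l^2 * v i)) = exp (l^2 * (\<Sum>i\<in>I. v i))"
      by (simp add: exp_sum fin sum_distrib_left)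
    then show ?thesis by (simp add: exp_diff exp_minus field_simps)
  qed
  also have "ennreal (exp (l^2 * (\<Sum>i\<in>I. v i) - l*\<epsilon>)) \<le> ennreal (exp (l^2 * V - l*\<epsilon>))"
    using V by (intro ennreal_leI) (simp add: mult_left_mono)
  finally show ?thesis by (simp add: ennreal_le_iff)
qed

locale core = prob_space M for M :: "'w measure" +
  fixes X :: "nat \<Rightarrow> 'w \<Rightarrow> real" and \<sigma> :: "nat \<Rightarrow> real" and a D :: real
  assumes indep: "indep_vars (\<lambda>_. borel) X UNIV"
  and X01: "\<And>n \<omega>. X n \<omega> = 0 \<or> X n \<omega> = 1"
  and dist1: "\<And>n. prob {\<omega>\<in>space M. X n \<omega> = 1} = \<sigma> n"
  and sig0: "\<And>n. 0 \<le> \<sigma> n" and sig1: "\<And>n. \<sigma> n \<le> 1"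
  and a_pos: "0 < a" and a_lt: "a < 1/2"
  and D_pos: "0 < D" and sigD: "\<And>n. n \<ge> 1 \<Longrightarrow> \<sigma> n \<le> D * real n powr (-a)"
begin

lemma X_meas[measurable]: "X n \<in> borel_measurable M"
  using indep unfolding indep_vars_def by auto

lemma absY: "\<bar>X n \<omega> - \<sigma> n\<bar> \<le> 1"
  using X01[of n \<omega>] sig0[of n] sig1[of n] by auto

lemma int_Y: "integrable M (\<lambda>\<omega>. X n \<omega> - \<sigma> n)"
  by (rule integrable_const_bound[where B=1]) (auto simp: absY)

lemma int_Y2: "integrable M (\<lambda>\<omega>. (X n \<omega> - \<sigma> n)^2)"
  by (rule integrable_const_bound[where B=1]) (auto simp: abs_square_le_1 absY)

lemma EX: "expectation (X n) = \<sigma> n"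
proof -
  have "expectation (X n) = expectation (indicator {\<omega>\<in>space M. X n \<omega> = 1})"
    by (rule Bochner_Integration.integral_cong[OF refl]) (use X01 in \<open>auto simp: indicator_def\<close>)
  also have "\<dots> = \<sigma> n" using dist1[of n] by simp
  finally show ?thesis .
qed

lemma int_X: "integrable M (X n)"
  proof (rule integrable_const_bound[where B=1])
  show "AE x in M. norm (X n x) \<le> 1"
  proof (rule AE_I2)
    fix x have "X n x = 0 \<or> X n x = 1" by (rule X01)
    then show "norm (X n x) \<le> 1" by auto
  qed
qed simp

lemma EY: "expectation (\<lambda>\<omega>. X n \<omega> - \<sigma> n) = 0"
  using EX[of n] int_X[of n] by (simp add: prob_space)

lemma EY2: "expectation (\<lambda>\<omega>. (X n \<omega> - \<sigma> n)^2) \<le> \<sigma> n"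
proof -
  have "expectation (\<lambda>\<omega>. (X n \<omega> - \<sigma> n)^2) = expectation (\<lambda>\<omega>. (1 - 2*\<sigma> n) * X n \<omega> + (\<sigma> n)^2)"
    by (rule Bochner_Integration.integral_cong[OF refl]) (use X01 in \<open>force simp: power2_eq_square algebra_simps\<close>)
  also have "\<dots> = (1 - 2*\<sigma> n) * \<sigma> n + (\<sigma> n)^2"
    using EX[of n] int_X[of n] by (simp add: prob_space)
  also have "\<dots> \<le> \<sigma> n" using sig0[of n] by (simp add: power2_eq_square algebra_simps)
  finally show ?thesis .
qed

lemma indep2: "i \<noteq> j \<Longrightarrow> indep_var borel (X i) borel (X j)"
proof -
  assume ij: "i \<noteq> j"
  have "indep_var (PiM {i} (\<lambda>_. borel)) (\<lambda>\<omega>. restrict (\<lambda>k. X k \<omega>) {i})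
                  (PiM {j} (\<lambda>_. borel)) (\<lambda>\<omega>. restrict (\<lambda>k. X k \<omega>) {j})"
    by (rule indep_var_restrict[OF indep]) (use ij in auto)
  then have "indep_var borel ((\<lambda>f. f i) \<circ> (\<lambda>\<omega>. restrict (\<lambda>k. X k \<omega>) {i}))
                  borel ((\<lambda>f. f j) \<circ> (\<lambda>\<omega>. restrict (\<lambda>k. X k \<omega>) {j}))"
    by (rule indep_var_compose) auto
  then show ?thesis by (simp add: comp_def)
qed

definition W :: "nat \<Rightarrow> nat \<Rightarrow> 'w \<Rightarrow> real" where
  "W m n \<omega> = (X (n+m) \<omega> - \<sigma> (n+m)) * (X n \<omega> - \<sigma> n)"

lemma W_meas[measurable]: "W m n \<in> borel_measurable M"
  unfolding W_def by measurable

lemma absW: "\<bar>W m n \<omega>\<bar> \<le> 1"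
  unfolding W_def abs_mult using absY[of "n+m" \<omega>] absY[of n \<omega>]
  by (simp add: mult_le_one)

lemma indepY: "i \<noteq> j \<Longrightarrow> indep_var borel (\<lambda>\<omega>. X i \<omega> - \<sigma> i) borel (\<lambda>\<omega>. X j \<omega> - \<sigma> j)"
proof -
  assume "i \<noteq> j"
  then have "indep_var borel ((\<lambda>x. x - \<sigma> i) \<circ> X i) borel ((\<lambda>x. x - \<sigma> j) \<circ> X j)"
    by (intro indep_var_compose[OF indep2]) auto
  then show ?thesis by (simp add: comp_def)
qed

lemma indepY2: "i \<noteq> j \<Longrightarrow> indep_var borel (\<lambda>\<omega>. (X i \<omega> - \<sigma> i)^2) borel (\<lambda>\<omega>. (X j \<omega> - \<sigma> j)^2)"
proof -
  assume "i \<noteq> j"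
  then have "indep_var borel ((\<lambda>x. (x - \<sigma> i)^2) \<circ> X i) borel ((\<lambda>x. (x - \<sigma> j)^2) \<circ> X j)"
    by (intro indep_var_compose[OF indep2]) auto
  then show ?thesis by (simp add: comp_def)
qed

lemma EW: "m \<ge> 1 \<Longrightarrow> expectation (\<lambda>\<omega>. c * W m n \<omega>) = 0"
proof -
  assume m: "m \<ge> 1"
  have "expectation (W m n) = expectation (\<lambda>\<omega>. X (n+m) \<omega> - \<sigma> (n+m)) * expectation (\<lambda>\<omega>. X n \<omega> - \<sigma> n)"
    unfolding W_def using m by (intro indep_var_lebesgue_integral indepY int_Y) auto
  then show ?thesis by (simp add: EY)
qed

lemma EW2: "m \<ge> 1 \<Longrightarrow> \<bar>c\<bar> \<le> 1 \<Longrightarrow> expectation (\<lambda>\<omega>. (c * W m n \<omega>)^2) \<le> \<sigma> (n+m) * \<sigma> n"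
proof -
  assume m: "m \<ge> 1" and c: "\<bar>c\<bar> \<le> 1"
  have "expectation (\<lambda>\<omega>. (c * W m n \<omega>)^2) = c^2 * expectation (\<lambda>\<omega>. (X (n+m) \<omega> - \<sigma> (n+m))^2 * (X n \<omega> - \<sigma> n)^2)"
    unfolding W_def by (simp add: power_mult_distrib mult.assoc)
  also have "expectation (\<lambda>\<omega>. (X (n+m) \<omega> - \<sigma> (n+m))^2 * (X n \<omega> - \<sigma> n)^2) =
      expectation (\<lambda>\<omega>. (X (n+m) \<omega> - \<sigma> (n+m))^2) * expectation (\<lambda>\<omega>. (X n \<omega> - \<sigma> n)^2)"
    using m by (intro indep_var_lebesgue_integral indepY2 int_Y2) auto
  also have "\<dots> \<le> \<sigma> (n+m) * \<sigma> n"
    by (intro mult_mono EY2 integral_nonneg_AE) (auto simp: sig0)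
  finally have "expectation (\<lambda>\<omega>. (c * W m n \<omega>)^2) \<le> c^2 * (\<sigma> (n+m) * \<sigma> n)"
    by (simp add: mult_left_mono)
  also have "\<dots> \<le> \<sigma> (n+m) * \<sigma> n"
    using c by (intro mult_left_le_one_le) (auto simp: sig0 abs_square_le_1)
  finally show ?thesis .
qed

lemma class_disj:
  fixes n n' m k :: nat
  assumes "1 \<le> n" "1 \<le> n'" "n \<noteq> n'" "((n-1) div m) mod 2 = k" "((n'-1) div m) mod 2 = k" "m \<ge> 1"
  shows "{n, n+m} \<inter> {n', n'+m} = {}"
proof -
  have *: "((p + m - 1) div m) mod 2 \<noteq> ((p-1) div m) mod 2" if "p \<ge> 1" for p
  proof -
    have "p + m - 1 = (p - 1) + m" using that by (cases p) auto
    then have "(p + m - 1) div m = (p - 1 + m) div m" by simp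
    also have "\<dots> = (p-1) div m + 1" using assms(6) by simp
    moreover have "(q + 1) mod 2 \<noteq> q mod (2::nat)" for q by presburger
    ultimately show ?thesis by metis
  qed
  have "n' \<noteq> n + m" using *[of n] assms by auto
  moreover have "n \<noteq> n' + m" using *[of n'] assms by auto
  ultimately show ?thesis using assms by auto
qed

lemma indepW:
  assumes m: "m \<ge> 1" and L: "\<And>n. n \<in> L \<Longrightarrow> 1 \<le> n \<and> ((n-1) div m) mod 2 = k"
  shows "indep_vars (\<lambda>_. borel) (\<lambda>n \<omega>. c n * W m n \<omega>) L"
proof -
  have "indep_vars (\<lambda>n. PiM {n, n+m} (\<lambda>_. borel)) (\<lambda>n \<omega>. restrict (\<lambda>i. X i \<omega>) {n, n+m}) L"
  proof (rule indep_vars_restrict[OF indep])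
    show "disjoint_family_on (\<lambda>n. {n, n+m}) L" unfolding disjoint_family_on_def
    proof (intro ballI impI)
      fix n n' assume "n \<in> L" "n' \<in> L" "n \<noteq> n'"
      then show "{n, n+m} \<inter> {n', n'+m} = {}"
        using L[of n] L[of n'] class_disj[of n n' m k] m by auto
    qed
  qed auto
  then have "indep_vars (\<lambda>_. borel) (\<lambda>n \<omega>. (\<lambda>h. c n * ((h (n+m) - \<sigma> (n+m)) * (h n - \<sigma> n))) (restrict (\<lambda>i. X i \<omega>) {n, n+m})) L"
  proof (rule indep_vars_compose2)
    fix n
    have [measurable]: "(\<lambda>h. h (n+m)) \<in> borel_measurable (PiM {n, n+m} (\<lambda>_. borel :: real measure))"
      by (rule measurable_component_singleton) auto
    have [measurable]: "(\<lambda>h. h n) \<in> borel_measurable (PiM {n, n+m} (\<lambda>_. borel :: real measure))"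
      by (rule measurable_component_singleton) auto
    show "(\<lambda>h. c n * ((h (n+m) - \<sigma> (n+m)) * (h n - \<sigma> n))) \<in> borel_measurable (PiM {n, n+m} (\<lambda>_. borel))"
      by measurable
  qed
  then show ?thesis by (simp add: W_def)
qed

lemma concW:
  assumes m: "m \<ge> 1" and L: "\<And>n. n \<in> L \<Longrightarrow> 1 \<le> n \<and> ((n-1) div m) mod 2 = k" and fin: "finite L"
  and c: "\<And>n. \<bar>c n\<bar> \<le> 1" and l: "0 < l" "l \<le> 1" and V: "(\<Sum>n\<in>L. \<sigma> (n+m) * \<sigma> n) \<le> V"
  shows "prob {\<omega>\<in>space M. (\<Sum>n\<in>L. c n * W m n \<omega>) \<ge> \<epsilon>} \<le> exp (l^2 * V - l*\<epsilon>)"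
proof (rule conc[where v="\<lambda>n. \<sigma> (n+m) * \<sigma> n"])
  show "indep_vars (\<lambda>_. borel) (\<lambda>n \<omega>. c n * W m n \<omega>) L" by (rule indepW[OF m L])
  show "\<bar>c n * W m n \<omega>\<bar> \<le> 1" for n \<omega>
    unfolding abs_mult by (intro mult_le_one) (auto simp: c absW)
  show "expectation (\<lambda>\<omega>. c n * W m n \<omega>) = 0" for n by (rule EW[OF m])
  show "expectation (\<lambda>\<omega>. (c n * W m n \<omega>)^2) \<le> \<sigma> (n+m) * \<sigma> n" for n by (rule EW2[OF m c])
qed (use fin l V in auto)

lemma concW_abs:
  assumes m: "m \<ge> 1" and L: "\<And>n. n \<in> L \<Longrightarrow> 1 \<le> n \<and> ((n-1) div m) mod 2 = k" and fin: "finite L"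
  and c: "\<And>n. \<bar>c n\<bar> \<le> 1" and l: "0 < l" "l \<le> 1" and V: "(\<Sum>n\<in>L. \<sigma> (n+m) * \<sigma> n) \<le> V"
  shows "prob {\<omega>\<in>space M. \<bar>\<Sum>n\<in>L. c n * W m n \<omega>\<bar> \<ge> \<epsilon>} \<le> 2 * exp (l^2 * V - l*\<epsilon>)"
proof -
  have "{\<omega>\<in>space M. \<bar>\<Sum>n\<in>L. c n * W m n \<omega>\<bar> \<ge> \<epsilon>} =
        {\<omega>\<in>space M. (\<Sum>n\<in>L. c n * W m n \<omega>) \<ge> \<epsilon>} \<union> {\<omega>\<in>space M. (\<Sum>n\<in>L. (- c n) * W m n \<omega>) \<ge> \<epsilon>}"
    by (auto simp: sum_negf abs_if)
  then have "prob {\<omega>\<in>space M. \<bar>\<Sum>n\<in>L. c n * W m n \<omega>\<bar> \<ge> \<epsilon>} \<le>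
        prob {\<omega>\<in>space M. (\<Sum>n\<in>L. c n * W m n \<omega>) \<ge> \<epsilon>} + prob {\<omega>\<in>space M. (\<Sum>n\<in>L. (- c n) * W m n \<omega>) \<ge> \<epsilon>}"
    by (simp add: measure_Un_le)
  also have "\<dots> \<le> exp (l^2 * V - l*\<epsilon>) + exp (l^2 * V - l*\<epsilon>)"
    by (intro add_mono concW[OF m L fin _ l V]) (auto simp: c)
  finally show ?thesis by simp
qed

definition "B0 = D^2 / (1 - 2*a)"
definition "Kc = sqrt (24 * B0)"
definition "eps N = Kc * real N powr (1/2 - a) * sqrt (ln (real N))"
definition "Vv N = B0 * real N powr (1 - 2*a)"
definition "lam N = eps N / (2 * Vv N)"
definition "Lset N m k = {n \<in> {1..N-m}. ((n-1) div m) mod 2 = (k::nat)}"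
definition "cf p u = (if p = (0::nat) then cos (2*pi*u) else sin (2*pi*u))"
definition "badset N m j k p = {\<omega>\<in>space M. eps N \<le> \<bar>\<Sum>n\<in>Lset N m k. cf p (real n * (real j / real (N^2))) * W m n \<omega>\<bar>}"
definition "Bad N = (\<Union>q\<in>{1..N} \<times> {0..N^2} \<times> {0..1::nat} \<times> {0..1::nat}.
    badset N (fst q) (fst (snd q)) (fst (snd (snd q))) (snd (snd (snd q))))"

lemma B0_pos: "0 < B0" unfolding B0_def using D_pos a_lt by auto
lemma Kc_pos: "0 < Kc" unfolding Kc_def using B0_pos by auto

lemma badset_sets[measurable]: "badset N m j k p \<in> sets M"
  unfolding badset_def by measurable

lemma Bad_sets[measurable]: "Bad N \<in> sets M"
  unfolding Bad_def by (intro sets.finite_UN) auto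

lemma sig_shift: "n \<ge> 1 \<Longrightarrow> \<sigma> (n+m) * \<sigma> n \<le> D^2 * real n powr (-(2*a))"
proof -
  assume n: "n \<ge> 1"
  have "\<sigma> (n+m) \<le> D * real (n+m) powr (-a)" using sigD[of "n+m"] n by auto
  also have "\<dots> \<le> D * real n powr (-a)"
    using n a_pos D_pos by (intro mult_left_mono powr_mono2') auto
  finally have 1: "\<sigma> (n+m) \<le> D * real n powr (-a)" .
  have "\<sigma> (n+m) * \<sigma> n \<le> (D * real n powr (-a)) * (D * real n powr (-a))"
    by (intro mult_mono 1 sigD n) (use D_pos sig0 in auto)
  also have "\<dots> = D^2 * real n powr (-(2*a))"
    by (simp add: power2_eq_square algebra_simps flip: powr_add)
  finally show ?thesis .
qed

lemma var_bound: "(\<Sum>n\<in>Lset N m k. \<sigma> (n+m) * \<sigma> n) \<le> Vv N"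
proof -
  have "(\<Sum>n\<in>Lset N m k. \<sigma> (n+m) * \<sigma> n) \<le> (\<Sum>n=1..N. \<sigma> (n+m) * \<sigma> n)"
    by (intro sum_mono2) (auto simp: Lset_def sig0)
  also have "\<dots> \<le> (\<Sum>n=1..N. D^2 * real n powr (-(2*a)))"
    by (intro sum_mono sig_shift) auto
  also have "\<dots> = D^2 * (\<Sum>n=1..N. real n powr (-(2*a)))"
    by (simp add: sum_distrib_left)
  also have "\<dots> \<le> D^2 * (real N powr (1 - 2*a) / (1 - 2*a))"
    using sum_powr_bound[of "2*a" N] a_pos a_lt by (intro mult_left_mono) auto
  also have "\<dots> = Vv N" by (simp add: Vv_def B0_def)
  finally show ?thesis .
qed

lemma cf_bound: "\<bar>cf p u\<bar> \<le> 1" by (simp add: cf_def)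

lemma prob_badset:
  assumes m: "m \<ge> 1" and l: "0 < lam N" "lam N \<le> 1"
  shows "prob (badset N m j k p) \<le> 2 * exp ((lam N)^2 * Vv N - lam N * eps N)"
  unfolding badset_def
  by (rule concW_abs[OF m _ _ cf_bound l var_bound]) (auto simp: Lset_def)

lemma exponent:
  assumes N: "N \<ge> 2"
  shows "(lam N)^2 * Vv N - lam N * eps N = - 6 * ln (real N)"
proof -
  define r where "r = real N powr (1 - 2*a)"
  define s where "s = ln (real N)"
  have r: "0 < r" using N by (simp add: r_def)
  have s: "0 < s" using N by (simp add: s_def)
  have V: "Vv N = B0 * r" by (simp add: Vv_def r_def)
  have "(real N powr (1/2 - a))^2 = r"
    by (simp add: r_def power2_eq_square flip: powr_add)
  then have eps2: "(eps N)^2 = 24 * B0 * r * s"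
    using s B0_pos by (simp add: eps_def Kc_def s_def power_mult_distrib)
  have Vp: "0 < Vv N" using V r B0_pos by simp
  have "(lam N)^2 * Vv N - lam N * eps N = - ((eps N)^2 / (4 * Vv N))"
    unfolding lam_def using Vp by (simp add: field_simps power2_eq_square)
  also have "\<dots> = - 6 * s" using eps2 V r B0_pos by (simp add: field_simps)
  finally show ?thesis by (simp add: s_def)
qed

lemma eps_pos: "N \<ge> 2 \<Longrightarrow> 0 < eps N"
  unfolding eps_def using Kc_pos by (intro mult_pos_pos) auto

lemma lam_pos: "N \<ge> 2 \<Longrightarrow> 0 < lam N"
  unfolding lam_def Vv_def using eps_pos B0_pos by auto

lemma prob_Bad:
  assumes N: "N \<ge> 2" and l: "lam N \<le> 1"
  shows "prob (Bad N) \<le> 16 / real N ^ 2"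
proof -
  let ?A = "{1..N} \<times> {0..N^2} \<times> {0..1::nat} \<times> {0..1::nat}"
  let ?b = "2 * exp (- 6 * ln (real N))"
  have "prob (Bad N) \<le> (\<Sum>q\<in>?A. prob (badset N (fst q) (fst (snd q)) (fst (snd (snd q))) (snd (snd (snd q)))))"
    unfolding Bad_def by (intro measure_UNION_le) auto
  also have "\<dots> \<le> real (card ?A) * ?b"
  proof (rule sum_bounded_above)
    fix q assume "q \<in> ?A"
    then show "prob (badset N (fst q) (fst (snd q)) (fst (snd (snd q))) (snd (snd (snd q)))) \<le> ?b"
      using prob_badset[OF _ lam_pos[OF N] l] exponent[OF N] by auto
  qed
  also have "real (card ?A) = real N * (real N ^ 2 + 1) * 4"
    by (simp add: card_cartesian_product algebra_simps)
  also have "exp (- 6 * ln (real N)) = 1 / real N ^ 6"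
  proof -
    have "exp (- 6 * ln (real N)) = real N powr (-6)" using N by (simp add: powr_def)
    also have "\<dots> = 1 / real N ^ 6" using N by (simp add: powr_minus powr_realpow divide_inverse)
    finally show ?thesis .
  qed
  also have "real N * (real N ^ 2 + 1) * 4 * (2 * (1 / real N ^ 6)) \<le> 16 / real N ^ 2"
  proof -
    define x where "x = real N"
    have x: "x \<ge> 2" using N by (simp add: x_def)
    have x2: "1 \<le> x^2" using x one_le_power[of x 2] by simp
    have h: "x * (x^2 + 1) \<le> 2 * x^4"
    proof -
      have "x * (x^2 + 1) \<le> x * (2 * x^2)" using x x2 by (intro mult_left_mono) auto
      also have "\<dots> = 2 * x^3 * 1" by (simp add: power2_eq_square power3_eq_cube)
      also have "\<dots> \<le> 2 * x^3 * x" using x by (intro mult_left_mono) auto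
      also have "\<dots> = 2 * x^4" by (simp add: power_Suc numeral_eq_Suc mult_ac)
      finally show ?thesis .
    qed
    have "x * (x^2 + 1) * 4 * (2 * (1 / x^6)) = 8 * (x * (x^2 + 1)) / x^6" by simp
    also have "\<dots> \<le> 8 * (2 * x^4) / x^6"
      using h x by (intro divide_right_mono mult_left_mono) auto
    also have "\<dots> = 16 / x^2"
    proof -
      have e6: "x^6 = x^4 * x^2" by (simp flip: power_add)
      have "x \<noteq> 0" using x by auto
      then show ?thesis unfolding e6 by (simp add: field_simps)
    qed
    finally show ?thesis by (simp add: x_def)
  qed
  finally show ?thesis .
qed

lemma lam_eq: "N \<ge> 1 \<Longrightarrow> lam N = Kc / (2*B0) * (sqrt (ln (real N)) / real N powr (1/2 - a))"
proof -
  assume N: "N \<ge> 1"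
  have "real N powr (1 - 2*a) = real N powr ((1/2 - a) + (1/2 - a))" by simp
  also have "\<dots> = real N powr (1/2 - a) * real N powr (1/2 - a)" by (rule powr_add)
  finally have h: "real N powr (1 - 2*a) = real N powr (1/2 - a) * real N powr (1/2 - a)" .
  have p: "0 < real N powr (1/2 - a)" using N by simp
  show ?thesis unfolding lam_def eps_def Vv_def h using p B0_pos by (simp add: field_simps)
qed

lemma ev_lam: "eventually (\<lambda>N. lam N \<le> 1) sequentially"
proof -
  have "((\<lambda>N::nat. sqrt (ln (real N)) / real N powr (1/2 - a)) \<longlongrightarrow> 0) at_top"
    using a_lt by (intro lim_aux) auto
  moreover have "0 < 2*B0/Kc" using B0_pos Kc_pos by auto
  ultimately have "eventually (\<lambda>N. sqrt (ln (real N)) / real N powr (1/2 - a) < 2*B0/Kc) sequentially"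
    by (rule order_tendstoD(2))
  then show ?thesis using eventually_ge_at_top[of "1::nat"]
  proof eventually_elim
    case (elim N)
    then have "Kc / (2*B0) * (sqrt (ln (real N)) / real N powr (1/2 - a)) \<le> Kc / (2*B0) * (2*B0/Kc)"
      using B0_pos Kc_pos by (intro mult_left_mono) auto
    also have "\<dots> = 1" using B0_pos Kc_pos by simp
    finally show ?case using lam_eq elim by simp
  qed
qed

lemma AE_notBad: "AE \<omega> in M. eventually (\<lambda>N. \<omega> \<in> space M - Bad N) sequentially"
proof (rule borel_cantelli_AE1)
  show "summable (\<lambda>N. prob (Bad N))"
  proof (rule summable_comparison_test_ev)
    show "summable (\<lambda>N. 16 * inverse (real N ^ 2))"
      by (intro summable_mult inverse_power_summable) auto
    show "eventually (\<lambda>N. norm (prob (Bad N)) \<le> 16 * inverse (real N ^ 2)) sequentially"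
      using ev_lam eventually_ge_at_top[of "2::nat"]
      by eventually_elim (use prob_Bad in \<open>auto simp: divide_inverse\<close>)
  qed
qed (auto simp: emeasure_eq_measure)

lemma e_norm: "norm (e t) = 1" by (simp add: e_cis)

lemma triv_bound: "norm (\<Sum>n=1..N-m. of_real (W m n \<omega>) * e (real n * t)) \<le> real N"
proof -
  have "norm (\<Sum>n=1..N-m. of_real (W m n \<omega>) * e (real n * t)) \<le> (\<Sum>n=1..N-m. norm (of_real (W m n \<omega>) * e (real n * t)))"
    by (rule norm_sum)
  also have "\<dots> \<le> (\<Sum>n=1..N-m. 1)"
    by (intro sum_mono) (simp add: norm_mult e_norm absW)
  also have "\<dots> \<le> real N" by simp
  finally show ?thesis .
qed

lemma good_bound:
  assumes \<omega>: "\<omega> \<in> space M" "\<omega> \<notin> Bad N" and N: "N \<ge> 1" and m: "m \<in> {1..N}" and t: "t \<in> {0..1}"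
  shows "norm (\<Sum>n=1..N-m. of_real (W m n \<omega>) * e (real n * t)) \<le> 4 * eps N + 4 * pi"
proof -
  define x where "x = t * real (N^2)"
  define j where "j = nat \<lfloor>x\<rfloor>"
  define tj where "tj = real j / real (N^2)"
  have NN: "0 < real (N^2)" using N by simp
  have x0: "0 \<le> x" using t by (simp add: x_def)
  have jx: "real j \<le> x" "x < real j + 1" using x0 by (auto simp: j_def)
  have "x \<le> real (N^2)" using t NN by (simp add: x_def mult_left_le_one_le)
  then have jN: "j \<le> N^2" using jx by linarith
  have tt: "\<bar>t - tj\<bar> \<le> 1 / real (N^2)"
  proof -
    have "t = x / real (N^2)" using NN by (simp add: x_def)
    then have "t - tj = (x - real j) / real (N^2)" by (simp add: tj_def diff_divide_distrib)
    then show ?thesis using jx NN by (simp add: abs_le_iff divide_right_mono)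
  qed
  have small: "\<bar>\<Sum>n\<in>Lset N m k. cf p (real n * tj) * W m n \<omega>\<bar> < eps N" if "k \<le> 1" "p \<le> 1" for k p
  proof -
    have "(m, j, k, p) \<in> {1..N} \<times> {0..N^2} \<times> {0..1::nat} \<times> {0..1::nat}" using m jN that by auto
    then have "\<omega> \<notin> badset N m j k p" using \<omega>(2) unfolding Bad_def by force
    then show ?thesis using \<omega>(1) by (simp add: badset_def tj_def)
  qed
  have partk: "norm (\<Sum>n\<in>Lset N m k. of_real (W m n \<omega>) * e (real n * tj)) \<le> 2 * eps N" if "k \<le> 1" for k
  proof -
    have "norm (\<Sum>n\<in>Lset N m k. of_real (W m n \<omega>) * e (real n * tj)) \<le>
       \<bar>Re (\<Sum>n\<in>Lset N m k. of_real (W m n \<omega>) * e (real n * tj))\<bar> + \<bar>Im (\<Sum>n\<in>Lset N m k. of_real (W m n \<omega>) * e (real n * tj))\<bar>"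
      by (rule cmod_le)
    also have "Re (\<Sum>n\<in>Lset N m k. of_real (W m n \<omega>) * e (real n * tj)) = (\<Sum>n\<in>Lset N m k. cf 0 (real n * tj) * W m n \<omega>)"
      by (simp add: e_cis cf_def mult_ac)
    also have "Im (\<Sum>n\<in>Lset N m k. of_real (W m n \<omega>) * e (real n * tj)) = (\<Sum>n\<in>Lset N m k. cf 1 (real n * tj) * W m n \<omega>)"
      by (simp add: e_cis cf_def mult_ac)
    finally show ?thesis using small[OF that, of 0] small[OF that, of 1] by simp
  qed
  have split: "{1..N-m} = Lset N m 0 \<union> Lset N m 1" "Lset N m 0 \<inter> Lset N m 1 = {}"
    by (auto simp: Lset_def)
  have grid: "norm (\<Sum>n=1..N-m. of_real (W m n \<omega>) * e (real n * tj)) \<le> 4 * eps N"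
  proof -
    have "(\<Sum>n=1..N-m. of_real (W m n \<omega>) * e (real n * tj)) =
      (\<Sum>n\<in>Lset N m 0. of_real (W m n \<omega>) * e (real n * tj)) + (\<Sum>n\<in>Lset N m 1. of_real (W m n \<omega>) * e (real n * tj))"
      unfolding split(1) by (rule sum.union_disjoint) (auto simp: Lset_def)
    also have "norm \<dots> \<le> 2 * eps N + 2 * eps N"
      by (rule order_trans[OF norm_triangle_ineq add_mono]) (auto intro: partk)
    finally show ?thesis by simp
  qed
  have diff: "norm ((\<Sum>n=1..N-m. of_real (W m n \<omega>) * e (real n * t)) - (\<Sum>n=1..N-m. of_real (W m n \<omega>) * e (real n * tj))) \<le> 4 * pi"
  proof -
    have "norm ((\<Sum>n=1..N-m. of_real (W m n \<omega>) * e (real n * t)) - (\<Sum>n=1..N-m. of_real (W m n \<omega>) * e (real n * tj)))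
        = norm (\<Sum>n=1..N-m. of_real (W m n \<omega>) * (e (real n * t) - e (real n * tj)))"
      by (simp add: sum_subtractf right_diff_distrib)
    also have "\<dots> \<le> (\<Sum>n=1..N-m. norm (of_real (W m n \<omega>) * (e (real n * t) - e (real n * tj))))"
      by (rule norm_sum)
    also have "\<dots> \<le> (\<Sum>n=1..N-m. 4 * pi / real N)"
    proof (rule sum_mono)
      fix n assume n: "n \<in> {1..N-m}"
      have "norm (of_real (W m n \<omega>) * (e (real n * t) - e (real n * tj))) = \<bar>W m n \<omega>\<bar> * norm (e (real n * t) - e (real n * tj))"
        by (simp add: norm_mult)
      also have "\<dots> \<le> 1 * (4 * pi * \<bar>real n * t - real n * tj\<bar>)"
        by (intro mult_mono absW e_lip) auto
      also have "\<bar>real n * t - real n * tj\<bar> = real n * \<bar>t - tj\<bar>"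
        by (simp add: right_diff_distrib[symmetric] abs_mult)
      also have "real n * \<bar>t - tj\<bar> \<le> real N * (1 / real (N^2))"
        using n tt by (intro mult_mono) auto
      also have "real N * (1 / real (N^2)) = 1 / real N" using N by (simp add: power2_eq_square)
      finally show "norm (of_real (W m n \<omega>) * (e (real n * t) - e (real n * tj))) \<le> 4 * pi / real N"
        by simp
    qed
    also have "\<dots> = real (N - m) * (4 * pi / real N)" by simp
    also have "\<dots> \<le> real N * (4 * pi / real N)"
      by (intro mult_right_mono) auto
    also have "\<dots> = 4 * pi" using N by simp
    finally show ?thesis .
  qed
  show ?thesis using grid diff norm_triangle_ineq2[of "\<Sum>n=1..N-m. of_real (W m n \<omega>) * e (real n * t)" "\<Sum>n=1..N-m. of_real (W m n \<omega>) * e (real n * tj)"]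
    by linarith
qed

theorem core_main: "AE \<omega> in M. \<exists>C. \<forall>N::nat. N \<ge> 2 \<longrightarrow>
           (\<forall>m\<in>{1..N}. \<forall>t\<in>{0..1::real}.
              norm (\<Sum>n=1..N-m. of_real ((X (n+m) \<omega> - \<sigma> (n+m)) * (X n \<omega> - \<sigma> n)) * e (real n * t))
                \<le> C * real N powr (1/2 - a) * sqrt (ln (real N)))"
  using AE_notBad
proof eventually_elim
  case (elim \<omega>)
  then obtain N0 where N0: "\<And>N. N \<ge> N0 \<Longrightarrow> \<omega> \<in> space M - Bad N"
    by (auto simp: eventually_sequentially)
  define c0 where "c0 = sqrt (ln 2)"
  have c0: "0 < c0" by (simp add: c0_def)
  define C where "C = 4 * Kc + (4 * pi + real N0) / c0"
  show ?case
  proof (intro exI[of _ C] allI impI ballI)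
    fix N :: nat and m t
    assume N: "2 \<le> N" and m: "m \<in> {1..N}" and t: "t \<in> {0..1::real}"
    define r where "r = real N powr (1/2 - a) * sqrt (ln (real N))"
    have p1: "1 \<le> real N powr (1/2 - a)" using N a_lt by (intro ge_one_powr_ge_zero) auto
    have s1: "c0 \<le> sqrt (ln (real N))" unfolding c0_def using N by simp
    have "c0 = 1 * c0" by simp
    also have "\<dots> \<le> r" unfolding r_def by (intro mult_mono p1 s1) (use c0 in auto)
    finally have r: "c0 \<le> r" .
    have rp: "0 < r" using r c0 by linarith
    have S: "norm (\<Sum>n=1..N-m. of_real ((X (n+m) \<omega> - \<sigma> (n+m)) * (X n \<omega> - \<sigma> n)) * e (real n * t))
        = norm (\<Sum>n=1..N-m. of_real (W m n \<omega>) * e (real n * t))" by (simp add: W_def)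
    have k1: "4 * pi \<le> (4 * pi / c0) * r" using r c0 by (simp add: field_simps)
    have k2: "real N0 \<le> (real N0 / c0) * r" using r c0 mult_right_mono[OF r, of "real N0"] by (simp add: field_simps)
    have k3: "0 \<le> (real N0 / c0) * r" "0 \<le> (4 * pi / c0) * r" "0 \<le> 4 * Kc * r" using rp c0 Kc_pos by auto
    have Cr: "C * real N powr (1/2 - a) * sqrt (ln (real N)) = 4 * Kc * r + (4 * pi / c0) * r + (real N0 / c0) * r"
      unfolding C_def r_def using c0 by (simp add: field_simps)
    show "norm (\<Sum>n=1..N-m. of_real ((X (n+m) \<omega> - \<sigma> (n+m)) * (X n \<omega> - \<sigma> n)) * e (real n * t))
                \<le> C * real N powr (1/2 - a) * sqrt (ln (real N))"
    proof (cases "N \<ge> N0")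
      case True
      then have "\<omega> \<in> space M" "\<omega> \<notin> Bad N" using N0 by auto
      then have "norm (\<Sum>n=1..N-m. of_real (W m n \<omega>) * e (real n * t)) \<le> 4 * eps N + 4 * pi"
        using N m t by (intro good_bound) auto
      moreover have "eps N = Kc * r" by (simp add: eps_def r_def mult.assoc)
      ultimately show ?thesis using S Cr k1 k3 by linarith
    next
      case False
      then have "real N \<le> real N0" by simp
      then show ?thesis using S Cr triv_bound[where N=N and m=m and \<omega>=\<omega> and t=t] k2 k3 by linarith
    qed
  qed
qed

end

theorem proposition3p2:
  fixes M :: "'w measure" and X :: "nat \<Rightarrow> 'w \<Rightarrow> real"
    and \<sigma> :: "nat \<Rightarrow> real" and a :: real
  assumes "prob_space M"
    and indep: "prob_space.indep_vars M (\<lambda>_. borel) X UNIV"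
    and dist1: "\<And>n. measure M {\<omega> \<in> space M. X n \<omega> = 1} = \<sigma> n"
    and dist0: "\<And>n. measure M {\<omega> \<in> space M. X n \<omega> = 0} = 1 - \<sigma> n"
    and sigma_range: "\<And>n. \<sigma> n \<in> {0..1}"
    and a_range: "0 < a" "a < 1/2"
    and asymp: "\<exists>c. c \<noteq> 0 \<and> (\<lambda>n. \<sigma> n / real n powr (-a)) \<longlonglongrightarrow> c"
  shows "AE \<omega> in M. \<exists>C. \<forall>N::nat. N \<ge> 2 \<longrightarrow>
           (\<forall>m\<in>{1..N}. \<forall>t\<in>{0..1::real}.
              norm (\<Sum>n=1..N-m. of_real ((X (n+m) \<omega> - \<sigma> (n+m)) * (X n \<omega> - \<sigma> n)) * e (real n * t))
                \<le> C * real N powr (1/2 - a) * sqrt (ln (real N)))"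
proof -
  interpret P: prob_space M by fact
  have Xm[measurable]: "X n \<in> borel_measurable M" for n
    using indep unfolding P.indep_vars_def by auto
  from asymp obtain c where "(\<lambda>n. \<sigma> n / real n powr (-a)) \<longlonglongrightarrow> c" by auto
  then have "Bseq (\<lambda>n. \<sigma> n / real n powr (-a))" by (intro convergent_imp_Bseq convergentI)
  then obtain Kb where Kb: "0 < Kb" "\<And>n. norm (\<sigma> n / real n powr (-a)) \<le> Kb" by (elim BseqE) auto
  have sigD: "\<sigma> n \<le> Kb * real n powr (-a)" if n: "n \<ge> 1" for n
  proof -
    have pos: "0 < real n powr (-a)" using n by simp
    have "\<sigma> n = (\<sigma> n / real n powr (-a)) * real n powr (-a)" using pos by simp
    also have "\<dots> \<le> Kb * real n powr (-a)"
    proof (intro mult_right_mono)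
      show "\<sigma> n / real n powr (-a) \<le> Kb"
        using Kb(2)[of n] by (metis abs_ge_self order_trans real_norm_def)
    qed (use pos in auto)
    finally show ?thesis .
  qed
  define X' where "X' n \<omega> = (if X n \<omega> = 1 then 1 else (0::real))" for n \<omega>
  have indep': "P.indep_vars (\<lambda>_. borel) X' UNIV"
    unfolding X'_def by (rule P.indep_vars_compose2[OF indep]) auto
  have dist1': "P.prob {\<omega>\<in>space M. X' n \<omega> = 1} = \<sigma> n" for n
  proof -
    have "{\<omega>\<in>space M. X' n \<omega> = 1} = {\<omega>\<in>space M. X n \<omega> = 1}" by (auto simp: X'_def)
    then show ?thesis using dist1[of n] by simp
  qed
  interpret C: core M X' \<sigma> a Kb
    by unfold_locales (use indep' dist1' sigma_range a_range Kb sigD in \<open>auto simp: X'_def\<close>)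
  have AE01: "AE \<omega> in M. \<forall>n. X n \<omega> = X' n \<omega>"
  proof (subst AE_all_countable, intro allI)
    fix n
    have "P.prob ({\<omega>\<in>space M. X n \<omega> = 1} \<union> {\<omega>\<in>space M. X n \<omega> = 0}) =
          P.prob {\<omega>\<in>space M. X n \<omega> = 1} + P.prob {\<omega>\<in>space M. X n \<omega> = 0}"
      by (intro P.finite_measure_Union) auto
    then have "P.prob ({\<omega>\<in>space M. X n \<omega> = 1} \<union> {\<omega>\<in>space M. X n \<omega> = 0}) = 1"
      using dist1[of n] dist0[of n] by simp
    then have "AE \<omega> in M. \<omega> \<in> {\<omega>\<in>space M. X n \<omega> = 1} \<union> {\<omega>\<in>space M. X n \<omega> = 0}"
      by (rule P.AE_prob_1)
    then show "AE \<omega> in M. X n \<omega> = X' n \<omega>"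
      by eventually_elim (auto simp: X'_def)
  qed
  show ?thesis using C.core_main AE01
    by eventually_elim simp
qed

end
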